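(* Let $G$ be a graph and $\Bbbk$ a field. (i) If there are distinct vertices $x,y$ with $N_G(y)\subseteq N_G(x)$, then $G$ is not a prime graph over $\Bbbk$. (ii) If there are distinct vertices $u,v$ with $N_G[u]\subseteq N_G[v]$ and $\deg_G(v)\ge 2$, then $G$ is not a prime graph over $\Bbbk$.
   Context: $N_G(x)$ is the open neighbourhood, $N_G[x]=N_G(x)\cup\{x\}$. $\operatorname{reg}_{\Bbbk}(G)=\max\{j\ge0:\widetilde H_{j-1}(\operatorname{Ind}(G[S]);\Bbbk)\neq0\text{ for some }S\subseteq V(G)\}$, $\operatorname{Ind}$ the independence complex (empty graph gives $\{\emptyset\}$ with $\widetilde H_{-1}=\Bbbk$). A connected graph $H$ is prime over $\Bbbk$ if $\operatorname{reg}_{\Bbbk}(H-x)<\operatorname{reg}_{\Bbbk}(H)$ for every vertex $x$. *)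

theory Defs
  imports Main
begin

definition graph :: "'a set \<Rightarrow> ('a \<Rightarrow> 'a \<Rightarrow> bool) \<Rightarrow> bool" where
  "graph V E \<longleftrightarrow> finite V \<and> (\<forall>x y. E x y \<longrightarrow> E y x) \<and> (\<forall>x. \<not> E x x)
      \<and> (\<forall>x y. E x y \<longrightarrow> x \<in> V \<and> y \<in> V)"

definition open_nbhd :: "'a set \<Rightarrow> ('a \<Rightarrow> 'a \<Rightarrow> bool) \<Rightarrow> 'a \<Rightarrow> 'a set" where
  "open_nbhd V E x = {y \<in> V. E x y}"

definition closed_nbhd :: "'a set \<Rightarrow> ('a \<Rightarrow> 'a \<Rightarrow> bool) \<Rightarrow> 'a \<Rightarrow> 'a set" where
  "closed_nbhd V E x = insert x (open_nbhd V E x)"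

definition degree :: "'a set \<Rightarrow> ('a \<Rightarrow> 'a \<Rightarrow> bool) \<Rightarrow> 'a \<Rightarrow> nat" where
  "degree V E x = card (open_nbhd V E x)"

definition connected_graph :: "'a set \<Rightarrow> ('a \<Rightarrow> 'a \<Rightarrow> bool) \<Rightarrow> bool" where
  "connected_graph V E \<longleftrightarrow> V \<noteq> {} \<and>
     (\<forall>x\<in>V. \<forall>y\<in>V. (\<lambda>a b. a \<in> V \<and> b \<in> V \<and> E a b)\<^sup>*\<^sup>* x y)"

text \<open>Faces of the independence complex of the induced subgraph G[S]
  (the empty set is always a face).\<close>

definition indep :: "('a \<Rightarrow> 'a \<Rightarrow> bool) \<Rightarrow> 'a set \<Rightarrow> 'a set \<Rightarrow> bool" where
  "indep E S F \<longleftrightarrow> F \<subseteq> S \<and> (\<forall>x\<in>F. \<forall>y\<in>F. \<not> E x y)"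

text \<open>Augmented (reduced) simplicial chain complex over a field 'k, with the
  usual orientation given by the linear order of the vertices.  A chain of
  degree j-1 is a 'k-valued function on faces of cardinality j.\<close>

definition face_sign :: "'a::linorder \<Rightarrow> 'a set \<Rightarrow> 'k::field" where
  "face_sign v F = (-1) ^ card {w \<in> F. w < v}"

definition bdry :: "'a::linorder set \<Rightarrow> ('a set \<Rightarrow> 'k::field) \<Rightarrow> 'a set \<Rightarrow> 'k" where
  "bdry S c G = (\<Sum>v\<in>S - G. face_sign v (insert v G) * c (insert v G))"

definition is_chain :: "('a \<Rightarrow> 'a \<Rightarrow> bool) \<Rightarrow> 'a set \<Rightarrow> nat \<Rightarrow> ('a set \<Rightarrow> 'k::field) \<Rightarrow> bool" where
  "is_chain E S j c \<longleftrightarrow> (\<forall>F. c F \<noteq> 0 \<longrightarrow> indep E S F \<and> card F = j)"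

definition is_cycle :: "('a::linorder \<Rightarrow> 'a \<Rightarrow> bool) \<Rightarrow> 'a set \<Rightarrow> nat \<Rightarrow> ('a set \<Rightarrow> 'k::field) \<Rightarrow> bool" where
  "is_cycle E S j c \<longleftrightarrow> is_chain E S j c \<and>
     (\<forall>G. indep E S G \<and> card G + 1 = j \<longrightarrow> bdry S c G = 0)"

definition is_boundary :: "('a::linorder \<Rightarrow> 'a \<Rightarrow> bool) \<Rightarrow> 'a set \<Rightarrow> nat \<Rightarrow> ('a set \<Rightarrow> 'k::field) \<Rightarrow> bool" where
  "is_boundary E S j c \<longleftrightarrow> (\<exists>d. is_chain E S (j + 1) d \<and>
     (\<forall>F. indep E S F \<and> card F = j \<longrightarrow> c F = bdry S d F))"

text \<open>ind_hom_nonzero K E S j: the reduced homology group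
  \<open>H~_{j-1}(Ind(G[S]); K)\<close> is nonzero.\<close>

definition ind_hom_nonzero :: "'k::field itself \<Rightarrow> ('a::linorder \<Rightarrow> 'a \<Rightarrow> bool) \<Rightarrow> 'a set \<Rightarrow> nat \<Rightarrow> bool" where
  "ind_hom_nonzero K E S j \<longleftrightarrow>
     (\<exists>c :: 'a set \<Rightarrow> 'k. is_cycle E S j c \<and> \<not> is_boundary E S j c)"

definition reg :: "'k::field itself \<Rightarrow> 'a::linorder set \<Rightarrow> ('a \<Rightarrow> 'a \<Rightarrow> bool) \<Rightarrow> nat" where
  "reg K V E = Max {j. \<exists>S\<subseteq>V. ind_hom_nonzero K E S j}"

definition prime_graph :: "'k::field itself \<Rightarrow> 'a::linorder set \<Rightarrow> ('a \<Rightarrow> 'a \<Rightarrow> bool) \<Rightarrow> bool" where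
  "prime_graph K V E \<longleftrightarrow> connected_graph V E \<and>
     (\<forall>x\<in>V. reg K (V - {x}) (\<lambda>a b. E a b \<and> a \<noteq> x \<and> b \<noteq> x) < reg K V E)"

end

theory Submission
  imports Defs
begin

lemma fs_sq: "(face_sign v F :: 'k::field) * face_sign v F = 1"
  unfolding face_sign_def by (simp flip: power_add add: power_mult_distrib)

lemma fs_nz: "(face_sign v F :: 'k::field) \<noteq> 0"
  by (simp add: face_sign_def)

lemma fs_insert:
  assumes "finite G" "v \<notin> G" "w \<notin> G" "v \<noteq> w"
  shows "(face_sign v (insert w (insert v G)) :: 'k::field) = (if w < v then -1 else 1) * face_sign v (insert v G)"
proof -
  let ?A = "{t \<in> insert v G. t < v}"
  have fA: "finite ?A" using assms by auto
  have wA: "w \<notin> ?A" using assms by auto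
  show ?thesis
  proof (cases "w < v")
    case True
    have "{t \<in> insert w (insert v G). t < v} = insert w ?A" using True by auto
    then show ?thesis using True fA wA by (simp add: face_sign_def)
  next
    case False
    have "{t \<in> insert w (insert v G). t < v} = ?A" using False by auto
    then show ?thesis using False by (simp add: face_sign_def)
  qed
qed

lemma sign_swap:
  assumes "finite G" "v \<notin> G" "w \<notin> G" "v \<noteq> w"
  shows "(face_sign w (insert w G) :: 'k::field) * face_sign v (insert v (insert w G))
        = - (face_sign v (insert v G) * face_sign w (insert w (insert v G)))"
proof -
  have 1: "(face_sign v (insert v (insert w G)) :: 'k) = (if w < v then -1 else 1) * face_sign v (insert v G)"
    using fs_insert[OF assms] by (simp add: insert_commute)
  have 2: "(face_sign w (insert w (insert v G)) :: 'k) = (if v < w then -1 else 1) * face_sign w (insert w G)"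
    using fs_insert[of G w v] assms by (simp add: insert_commute)
  show ?thesis
  proof (cases "w < v")
    case True
    then have "\<not> v < w" by simp
    then show ?thesis unfolding 1 2 using True by (simp add: mult.commute)
  next
    case False
    then have "v < w" using assms(4) by (simp add: neq_iff)
    then show ?thesis unfolding 1 2 using False by (simp add: mult.commute)
  qed
qed

lemma antisym_sum:
  fixes f :: "'a \<Rightarrow> 'a \<Rightarrow> 'k::field"
  assumes "finite A" "\<And>v u. v\<in>A \<Longrightarrow> u\<in>A \<Longrightarrow> v\<noteq>u \<Longrightarrow> f u v = - f v u"
  shows "(\<Sum>v\<in>A. \<Sum>u\<in>A-{v}. f v u) = 0"
  using assms
proof (induction A rule: finite_induct)
  case empty then show ?case by simp
next
  case (insert a A)
  note hyps = insert.hyps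
  have anti: "\<And>v u. v\<in>insert a A \<Longrightarrow> u\<in>insert a A \<Longrightarrow> v\<noteq>u \<Longrightarrow> f u v = - f v u"
    by (rule insert.prems)
  have IH: "(\<Sum>v\<in>A. \<Sum>u\<in>A-{v}. f v u) = 0"
    by (rule insert.IH) (rule anti, auto)
  have "(\<Sum>v\<in>insert a A. \<Sum>u\<in>insert a A-{v}. f v u)
      = (\<Sum>u\<in>insert a A-{a}. f a u) + (\<Sum>v\<in>A. \<Sum>u\<in>insert a A-{v}. f v u)"
    by (rule sum.insert[OF hyps])
  also have "insert a A - {a} = A" using hyps by auto
  also have "(\<Sum>v\<in>A. \<Sum>u\<in>insert a A-{v}. f v u) = (\<Sum>v\<in>A. f v a + (\<Sum>u\<in>A-{v}. f v u))"
  proof (rule sum.cong)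
    fix v assume "v \<in> A"
    then have "insert a A - {v} = insert a (A - {v})" using hyps by auto
    then show "(\<Sum>u\<in>insert a A-{v}. f v u) = f v a + (\<Sum>u\<in>A-{v}. f v u)"
      using sum.insert[of "A-{v}" a "f v"] hyps by simp
  qed simp
  also have "\<dots> = (\<Sum>v\<in>A. f v a)" using IH by (simp only: sum.distrib) simp
  also have "(\<Sum>u\<in>A. f a u) + (\<Sum>v\<in>A. f v a) = (\<Sum>v\<in>A. f a v + f v a)"
    by (simp only: sum.distrib)
  also have "\<dots> = 0"
  proof (rule sum.neutral, rule ballI)
    fix v assume "v \<in> A"
    then have "f v a = - f a v" using anti hyps by auto
    then show "f a v + f v a = 0" by simp
  qed
  finally show ?case .
qed

lemma bdry_bdry:
  assumes "finite S" "finite G"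
  shows "bdry S (bdry S D) G = (0::'k::field)"
proof -
  let ?f = "\<lambda>v u. (face_sign v (insert v G) :: 'k) * (face_sign u (insert u (insert v G)) * D (insert u (insert v G)))"
  have "bdry S (bdry S D) G = (\<Sum>v\<in>S-G. \<Sum>u\<in>(S-G)-{v}. ?f v u)"
    unfolding bdry_def
  proof (rule sum.cong[OF refl])
    fix v assume "v \<in> S-G"
    have e: "S - insert v G = (S-G)-{v}" by auto
    show "face_sign v (insert v G) * (\<Sum>u\<in>S - insert v G. face_sign u (insert u (insert v G)) * D (insert u (insert v G)))
       = (\<Sum>u\<in>(S-G)-{v}. ?f v u)"
      unfolding e by (simp add: sum_distrib_left)
  qed
  also have "\<dots> = 0"
  proof (rule antisym_sum)
    fix v u assume a: "v \<in> S-G" "u \<in> S-G" "v \<noteq> u"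
    have "(face_sign u (insert u G) :: 'k) * face_sign v (insert v (insert u G)) =
          - (face_sign v (insert v G) * face_sign u (insert u (insert v G)))"
      using sign_swap[of G v u] a assms by auto
    then show "?f u v = - ?f v u"
      by (simp add: insert_commute mult.assoc[symmetric])
  qed (use assms in auto)
  finally show ?thesis .
qed

definition link :: "'a::linorder \<Rightarrow> ('a set \<Rightarrow> 'k::field) \<Rightarrow> 'a set \<Rightarrow> 'k" where
  "link w d G = (if w \<in> G then 0 else face_sign w (insert w G) * d (insert w G))"

definition cone :: "'a::linorder \<Rightarrow> ('a set \<Rightarrow> 'k::field) \<Rightarrow> 'a set \<Rightarrow> 'k" where
  "cone w e F = (if w \<in> F then face_sign w F * e (F - {w}) else 0)"

lemma bdry_add: "bdry S (\<lambda>F. a F + b F) G = bdry S a G + bdry S b G"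
  by (simp add: bdry_def distrib_left sum.distrib)
lemma bdry_diff: "bdry S (\<lambda>F. a F - b F) G = bdry S a G - bdry S b G"
  by (simp add: bdry_def right_diff_distrib sum_subtractf)
lemma bdry_neg: "bdry S (\<lambda>F. - a F) G = - bdry S a G"
  by (simp add: bdry_def sum_negf)
lemma bdry_zero: "bdry S (\<lambda>F. 0) G = 0"
  by (simp add: bdry_def)

lemma bdry_remove:
  assumes "finite S" "a (insert w G) = 0"
  shows "bdry S a G = bdry (S - {w}) a G"
proof (cases "w \<in> S - G")
  case True
  have e: "S - G = insert w (S - {w} - G)" using True by auto
  show ?thesis unfolding bdry_def e using assms by simp
next
  case False
  have e: "S - G = S - {w} - G" using False by auto
  show ?thesis unfolding bdry_def e ..
qed

lemma bdry_single:
  assumes "finite S" "y \<in> S - G" "\<And>v. v \<in> S - G \<Longrightarrow> v \<noteq> y \<Longrightarrow> a (insert v G) = 0"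
  shows "bdry S a G = face_sign y (insert y G) * a (insert y G)"
proof -
  have e: "S - G = insert y (S - G - {y})" using assms by auto
  have "bdry S a G = face_sign y (insert y G) * a (insert y G) +
     (\<Sum>v\<in>S - G - {y}. face_sign v (insert v G) * a (insert v G))"
    unfolding bdry_def by (subst e, subst sum.insert) (use assms in auto)
  also have "(\<Sum>v\<in>S - G - {y}. face_sign v (insert v G) * a (insert v G)) = 0"
    by (rule sum.neutral) (use assms in auto)
  finally show ?thesis by simp
qed

lemma indep_mono: "indep E S F \<Longrightarrow> S \<subseteq> S' \<Longrightarrow> indep E S' F"
  by (auto simp: indep_def)
lemma indep_sub: "indep E S F \<Longrightarrow> F' \<subseteq> F \<Longrightarrow> indep E S F'"
  by (auto simp: indep_def)

lemma chain_mono: "is_chain E S j c \<Longrightarrow> S \<subseteq> S' \<Longrightarrow> is_chain E S' j c"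
  unfolding is_chain_def by (blast intro: indep_mono)
lemma chain_add: "is_chain E S j a \<Longrightarrow> is_chain E S j b \<Longrightarrow> is_chain E S j (\<lambda>F. a F + b F)"
  unfolding is_chain_def by (metis add.right_neutral add_0)
lemma chain_diff: "is_chain E S j a \<Longrightarrow> is_chain E S j b \<Longrightarrow> is_chain E S j (\<lambda>F. a F - b F)"
  unfolding is_chain_def by (metis diff_self diff_zero)
lemma chain_neg: "is_chain E S j a \<Longrightarrow> is_chain E S j (\<lambda>F. - a F)"
  unfolding is_chain_def by simp

lemma chain_bdry:
  assumes "finite S" "is_chain E S (Suc j) D"
  shows "is_chain E S j (bdry S D)"
  unfolding is_chain_def
proof (intro allI impI)
  fix F assume nz: "bdry S D F \<noteq> 0"
  obtain v where v: "v \<in> S - F" "face_sign v (insert v F) * D (insert v F) \<noteq> 0"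
    using nz unfolding bdry_def by (meson sum.neutral)
  then have "D (insert v F) \<noteq> 0" by auto
  then have i: "indep E S (insert v F)" and c: "card (insert v F) = Suc j"
    using assms(2) unfolding is_chain_def by auto
  have "finite (insert v F)" using c by (metis card.infinite nat.distinct(1))
  then have "card (insert v F) = Suc (card F)" using v by simp
  then show "indep E S F \<and> card F = j" using c i indep_sub by auto
qed

lemma chain_link:
  assumes "is_chain E S (Suc j) d"
  shows "is_chain E {t\<in>S. t \<noteq> w \<and> \<not> E w t} j (link w d)"
  unfolding is_chain_def
proof (intro allI impI)
  fix G assume nz: "link w d G \<noteq> 0"
  then have w: "w \<notin> G" and dn: "d (insert w G) \<noteq> 0" by (auto simp: link_def split: if_splits)
  then have i: "indep E S (insert w G)" and c: "card (insert w G) = Suc j"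
    using assms unfolding is_chain_def by auto
  have "finite (insert w G)" using c by (metis card.infinite nat.distinct(1))
  then have "card (insert w G) = Suc (card G)" using w by simp
  then show "indep E {t\<in>S. t \<noteq> w \<and> \<not> E w t} G \<and> card G = j"
    using c i w unfolding indep_def by auto
qed

lemma cone_out: "w \<notin> F \<Longrightarrow> cone w e F = 0"
  by (simp add: cone_def)

lemma link_cone:
  assumes "is_chain E T j e" "w \<notin> T"
  shows "link w (cone w e) = e"
proof
  fix G
  show "link w (cone w e) G = e G"
  proof (cases "w \<in> G")
    case True
    then have "e G = 0" using assms unfolding is_chain_def indep_def by auto
    then show ?thesis using True by (simp add: link_def)
  next
    case False
    then show ?thesis
      by (simp add: link_def cone_def mult.assoc[symmetric] fs_sq)
  qed
qed

lemma KI: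
  assumes "finite S" "w \<notin> G" "G \<subseteq> S" "\<forall>F. d F \<noteq> 0 \<longrightarrow> indep E S F"
  shows "(face_sign w (insert w G) :: 'k::field) * bdry S d (insert w G)
        = - bdry {t\<in>S. t \<noteq> w \<and> \<not> E w t} (link w d) G"
proof -
  let ?T = "{t\<in>S. t \<noteq> w \<and> \<not> E w t}"
  have fG: "finite G" using assms finite_subset by auto
  have 1: "bdry S d (insert w G) = (\<Sum>v\<in>?T-G. face_sign v (insert v (insert w G)) * d (insert v (insert w G)))"
    unfolding bdry_def
  proof (rule sum.mono_neutral_right)
    show "finite (S - insert w G)" using assms by auto
    show "?T - G \<subseteq> S - insert w G" by auto
    show "\<forall>v\<in>S - insert w G - (?T - G). face_sign v (insert v (insert w G)) * d (insert v (insert w G)) = 0"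
    proof
      fix v assume v: "v \<in> S - insert w G - (?T - G)"
      then have "E w v" by auto
      then have "\<not> indep E S (insert v (insert w G))" unfolding indep_def by auto
      then have "d (insert v (insert w G)) = 0" using assms(4) by auto
      then show "face_sign v (insert v (insert w G)) * d (insert v (insert w G)) = 0" by simp
    qed
  qed
  have 2: "bdry ?T (link w d) G = (\<Sum>v\<in>?T-G. face_sign v (insert v G) * (face_sign w (insert w (insert v G)) * d (insert w (insert v G))))"
    unfolding bdry_def link_def by (rule sum.cong) (use assms(2) in auto)
  have "(face_sign w (insert w G) :: 'k) * bdry S d (insert w G)
      = (\<Sum>v\<in>?T-G. - (face_sign v (insert v G) * (face_sign w (insert w (insert v G)) * d (insert w (insert v G)))))"
    unfolding 1 sum_distrib_left
  proof (rule sum.cong[OF refl])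
    fix v assume v: "v \<in> ?T - G"
    have "(face_sign w (insert w G) :: 'k) * face_sign v (insert v (insert w G))
        = - (face_sign v (insert v G) * face_sign w (insert w (insert v G)))"
      by (rule sign_swap) (use v fG assms in auto)
    then show "face_sign w (insert w G) * (face_sign v (insert v (insert w G)) * d (insert v (insert w G)))
       = - (face_sign v (insert v G) * (face_sign w (insert w (insert v G)) * d (insert w (insert v G))))"
      by (simp add: insert_commute mult.assoc[symmetric])
  qed
  also have "\<dots> = - bdry ?T (link w d) G" unfolding 2 by (simp add: sum_negf)
  finally show ?thesis .
qed


locale sg =
  fixes E :: "'a::linorder \<Rightarrow> 'a \<Rightarrow> bool"
  assumes symE: "\<And>a b. E a b \<Longrightarrow> E b a" and irr: "\<And>a. \<not> E a a"
begin

lemma indep_insert_T: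
  assumes "w \<in> S" "indep E {t\<in>S. t \<noteq> w \<and> \<not> E w t} G"
  shows "indep E S (insert w G)"
  unfolding indep_def
proof (intro conjI ballI)
  show "insert w G \<subseteq> S" using assms by (auto simp: indep_def)
  fix x y assume x: "x \<in> insert w G" and y: "y \<in> insert w G"
  have G: "\<And>a b. a \<in> G \<Longrightarrow> b \<in> G \<Longrightarrow> \<not> E a b" "\<And>a. a \<in> G \<Longrightarrow> \<not> E w a"
    using assms(2) by (auto simp: indep_def)
  show "\<not> E x y"
  proof
    assume Exy: "E x y"
    show False
    proof (cases "x = w")
      case True
      then show False using Exy G y irr by auto
    next
      case False
      then have xG: "x \<in> G" using x by auto
      show False
      proof (cases "y = w")
        case True
        then show False using symE[OF Exy] G xG by auto
      next
        case False
        then show False using y xG G Exy by auto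
      qed
    qed
  qed
qed

lemma indep_remove_T:
  "w \<notin> G \<Longrightarrow> indep E S (insert w G) \<Longrightarrow> indep E {t\<in>S. t \<noteq> w \<and> \<not> E w t} G"
  unfolding indep_def by auto

lemma chain_cone:
  assumes "w \<in> S" "finite S" "is_chain E {t\<in>S. t \<noteq> w \<and> \<not> E w t} j e"
  shows "is_chain E S (Suc j) (cone w e)"
  unfolding is_chain_def
proof (intro allI impI)
  fix F assume nz: "cone w e F \<noteq> 0"
  then have w: "w \<in> F" and en: "e (F - {w}) \<noteq> 0" by (auto simp: cone_def split: if_splits)
  then have i: "indep E {t\<in>S. t \<noteq> w \<and> \<not> E w t} (F - {w})" and c: "card (F - {w}) = j"
    using assms(3) unfolding is_chain_def by auto
  have "F - {w} \<subseteq> S" using i unfolding indep_def by auto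
  then have fin: "finite (F - {w})" using assms(2) finite_subset by blast
  then have finF: "finite F" by simp
  have "card F = Suc j" using c finF w by (metis card_Suc_Diff1)
  moreover have "indep E S (insert w (F - {w}))" by (rule indep_insert_T[OF assms(1) i])
  moreover have "insert w (F - {w}) = F" using w by auto
  ultimately show "indep E S F \<and> card F = Suc j" by simp
qed

lemma exactA:
  fixes c :: "'a set \<Rightarrow> 'k::field"
  assumes fS: "finite S" and wS: "w \<in> S" and cyc: "is_cycle E S j c" and nb: "\<not> is_boundary E S j c"
  shows "(\<exists>c'::'a set \<Rightarrow> 'k. is_cycle E (S - {w}) j c' \<and> \<not> is_boundary E (S - {w}) j c') \<or>
         (\<exists>c1::'a set \<Rightarrow> 'k. 0 < j \<and> is_cycle E {t\<in>S. t \<noteq> w \<and> \<not> E w t} (j - 1) c1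
              \<and> \<not> is_boundary E {t\<in>S. t \<noteq> w \<and> \<not> E w t} (j - 1) c1)"
proof -
  define T where "T = {t\<in>S. t \<noteq> w \<and> \<not> E w t}"
  define c1 where "c1 = link w c"
  have chc: "is_chain E S j c" using cyc by (simp add: is_cycle_def)
  have cind: "\<forall>F. c F \<noteq> 0 \<longrightarrow> indep E S F" using chc by (simp add: is_chain_def)
  have fT: "finite T" using fS by (simp add: T_def)
  have wT: "w \<notin> T" and TS: "T \<subseteq> S" by (auto simp: T_def)
  have KIc: "face_sign w (insert w G) * bdry S c (insert w G) = - bdry T c1 G" if "G \<subseteq> T" for G
    unfolding c1_def T_def by (rule KI[OF fS _ _ cind]) (use that wT TS in auto)
  show ?thesis
  proof (cases "\<exists>e. is_chain E T j e \<and> (\<forall>G. indep E T G \<and> card G + 1 = j \<longrightarrow> c1 G = bdry T e G)")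
    case False
    have jpos: "0 < j"
    proof (rule ccontr)
      assume "\<not> 0 < j" then have "j = 0" by simp
      then have "is_chain E T j (\<lambda>F. 0) \<and> (\<forall>G. indep E T G \<and> card G + 1 = j \<longrightarrow> c1 G = bdry T (\<lambda>F. 0) G)"
        by (simp add: is_chain_def)
      with False show False by blast
    qed
    then obtain m where jm: "j = Suc m" by (cases j) auto
    have ch1: "is_chain E T m c1" using chain_link[of E S m c w] chc jm by (simp add: c1_def T_def)
    have cy1: "is_cycle E T m c1" unfolding is_cycle_def
    proof (intro conjI allI impI)
      show "is_chain E T m c1" by (fact ch1)
      fix G assume G: "indep E T G \<and> card G + 1 = m"
      have GT: "G \<subseteq> T" using G by (simp add: indep_def)
      have fG: "finite G" using GT fT finite_subset by auto
      have wG: "w \<notin> G" using GT wT by auto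
      have "indep E S (insert w G)" using indep_insert_T[OF wS] G by (simp add: T_def)
      moreover have "card (insert w G) + 1 = j" using G fG wG jm by auto
      ultimately have "bdry S c (insert w G) = 0" using cyc by (simp add: is_cycle_def)
      then show "bdry T c1 G = 0" using KIc[OF GT] by simp
    qed
    have nb1: "\<not> is_boundary E T m c1"
    proof
      assume "is_boundary E T m c1"
      then obtain e where "is_chain E T (m+1) e" "\<forall>F. indep E T F \<and> card F = m \<longrightarrow> c1 F = bdry T e F"
        by (auto simp: is_boundary_def)
      then have "is_chain E T j e \<and> (\<forall>G. indep E T G \<and> card G + 1 = j \<longrightarrow> c1 G = bdry T e G)"
        using jm by auto
      with False show False by blast
    qed
    have "j - 1 = m" using jm by simp
    then show ?thesis using jpos cy1 nb1 unfolding T_def by auto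
  next
    case True
    then obtain e where che: "is_chain E T j e"
      and ce: "\<forall>G. indep E T G \<and> card G + 1 = j \<longrightarrow> c1 G = bdry T e G" by blast
    define D where "D = cone w e"
    have chD: "is_chain E S (Suc j) D" using chain_cone[OF wS fS] che by (simp add: D_def T_def)
    have Dind: "\<forall>F. D F \<noteq> 0 \<longrightarrow> indep E S F" using chD by (simp add: is_chain_def)
    have lD: "link w D = e" using link_cone[OF che wT] by (simp add: D_def)
    define c' where "c' = (\<lambda>F. c F + bdry S D F)"
    have chc': "is_chain E S j c'" unfolding c'_def by (rule chain_add[OF chc chain_bdry[OF fS chD]])
    have c'w: "c' F = 0" if wF: "w \<in> F" for F
    proof (rule ccontr)
      assume nz: "c' F \<noteq> 0"
      then have iF: "indep E S F" and cF: "card F = j" using chc' by (auto simp: is_chain_def)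
      define G where "G = F - {w}"
      have FG: "F = insert w G" "w \<notin> G" using wF by (auto simp: G_def)
      have iG: "indep E T G" using indep_remove_T[OF FG(2)] iF FG by (simp add: T_def)
      have GT: "G \<subseteq> T" using iG by (simp add: indep_def)
      have fG: "finite G" using GT fT finite_subset by auto
      have cG: "card G + 1 = j" using cF fG FG by simp
      have "c1 G = bdry T e G" using ce iG cG by blast
      then have 1: "face_sign w F * c F = bdry T e G"
        using FG by (simp add: c1_def link_def)
      have "face_sign w (insert w G) * bdry S D (insert w G) = - bdry T (link w D) G"
        unfolding T_def by (rule KI[OF fS FG(2) _ Dind]) (use GT TS in auto)
      then have 2: "face_sign w F * bdry S D F = - bdry T e G" using lD FG by simp
      have "face_sign w F * c' F = 0" unfolding c'_def using 1 2 by (simp add: distrib_left)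
      then show False using nz by (simp add: fs_nz)
    qed
    have chc'2: "is_chain E (S - {w}) j c'"
      using chc' c'w unfolding is_chain_def indep_def by blast
    have cyc': "is_cycle E (S - {w}) j c'"
      unfolding is_cycle_def
    proof (intro conjI allI impI)
      show "is_chain E (S - {w}) j c'" by (fact chc'2)
      fix G assume G: "indep E (S - {w}) G \<and> card G + 1 = j"
      have iG: "indep E S G" using G indep_mono by blast
      have fG: "finite G" using iG fS by (auto simp: indep_def intro: finite_subset)
      have "bdry (S - {w}) c' G = bdry S c' G"
        using bdry_remove[OF fS, of c' w G] c'w by simp
      also have "\<dots> = bdry S c G + bdry S (bdry S D) G" unfolding c'_def by (rule bdry_add)
      also have "\<dots> = 0" using cyc iG G bdry_bdry[OF fS fG] by (simp add: is_cycle_def)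
      finally show "bdry (S - {w}) c' G = 0" .
    qed
    have nb': "\<not> is_boundary E (S - {w}) j c'"
    proof
      assume "is_boundary E (S - {w}) j c'"
      then obtain d' where chd': "is_chain E (S - {w}) (j+1) d'"
        and cd': "\<forall>F. indep E (S - {w}) F \<and> card F = j \<longrightarrow> c' F = bdry (S - {w}) d' F"
        by (auto simp: is_boundary_def)
      have d'w: "d' F = 0" if "w \<in> F" for F
        using chd' that unfolding is_chain_def indep_def by blast
      have "is_boundary E S j c" unfolding is_boundary_def
      proof (intro exI conjI allI impI)
        have "is_chain E S (Suc j) d'" using chain_mono[OF chd', of S] by auto
        then show "is_chain E S (j+1) (\<lambda>F. d' F - D F)"
          using chain_diff[OF _ chD] by auto
        fix F assume F: "indep E S F \<and> card F = j"
        have "c' F = bdry S d' F"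
        proof (cases "w \<in> F")
          case True
          have "bdry S d' F = 0" unfolding bdry_def
            by (rule sum.neutral) (use True d'w in auto)
          with c'w True show ?thesis by simp
        next
          case False
          then have "indep E (S - {w}) F" using F by (auto simp: indep_def)
          then have "c' F = bdry (S - {w}) d' F" using cd' F by auto
          also have "\<dots> = bdry S d' F" using bdry_remove[OF fS, of d' w F] d'w by simp
          finally show ?thesis .
        qed
        then show "c F = bdry S (\<lambda>F. d' F - D F) F" by (simp add: bdry_diff c'_def eq_diff_eq)
      qed
      with nb show False by simp
    qed
    show ?thesis using cyc' nb' by blast
  qed
qed


lemma isolated_boundary:
  fixes c :: "'a set \<Rightarrow> 'k::field"
  assumes fT: "finite T" and yT: "y \<in> T" and iso: "\<forall>t\<in>T. \<not> E y t" and cyc: "is_cycle E T j c"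
  shows "is_boundary E T j c"
proof -
  define T' where "T' = {t\<in>T. t \<noteq> y \<and> \<not> E y t}"
  have T'eq: "T' = T - {y}" using iso by (auto simp: T'_def)
  define c0 where "c0 = (\<lambda>F. if y \<in> F then 0 else c F)"
  have chc: "is_chain E T j c" using cyc by (simp add: is_cycle_def)
  have chc0: "is_chain E T' j c0"
    unfolding is_chain_def
  proof (intro allI impI)
    fix F assume "c0 F \<noteq> 0"
    then have yF: "y \<notin> F" and "c F \<noteq> 0" by (auto simp: c0_def split: if_splits)
    then have "indep E T F" "card F = j" using chc by (auto simp: is_chain_def)
    then show "indep E T' F \<and> card F = j" using yF T'eq by (auto simp: indep_def)
  qed
  define d where "d = cone y c0"
  have chd: "is_chain E T (Suc j) d" using chain_cone[OF yT fT] chc0 by (simp add: d_def T'_def)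
  have dind: "\<forall>F. d F \<noteq> 0 \<longrightarrow> indep E T F" using chd by (simp add: is_chain_def)
  have yT': "y \<notin> T'" by (simp add: T'eq)
  have ld: "link y d = c0" using link_cone[OF chc0 yT'] by (simp add: d_def)
  show ?thesis unfolding is_boundary_def
  proof (intro exI conjI allI impI)
    show "is_chain E T (j+1) d" using chd by simp
    fix F assume F: "indep E T F \<and> card F = j"
    show "c F = bdry T d F"
    proof (cases "y \<in> F")
      case False
      have "bdry T d F = face_sign y (insert y F) * d (insert y F)"
        by (rule bdry_single) (use fT yT False in \<open>auto simp: d_def cone_def\<close>)
      also have "\<dots> = c F" using False by (simp add: d_def cone_def c0_def mult.assoc[symmetric] fs_sq)
      finally show ?thesis by simp
    next
      case True
      define G where "G = F - {y}"
      have FG: "F = insert y G" "y \<notin> G" using True by (auto simp: G_def)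
      have GT': "G \<subseteq> T'" using F FG T'eq by (auto simp: indep_def)
      have fG: "finite G" using GT' fT T'eq finite_subset by blast
      have "face_sign y (insert y G) * bdry T d (insert y G) = - bdry T' (link y d) G"
        unfolding T'_def by (rule KI[OF fT FG(2) _ dind]) (use GT' T'eq in auto)
      then have 1: "face_sign y F * bdry T d F = - bdry T' c0 G" using ld FG by simp
      have cG: "card G + 1 = j" using F FG fG by simp
      have iG: "indep E T G" using F FG indep_sub by blast
      have z: "bdry T c G = 0" using cyc iG cG by (simp add: is_cycle_def)
      have e: "T - G = insert y (T' - G)" using yT FG T'eq by auto
      have "bdry T c G = face_sign y (insert y G) * c (insert y G) + (\<Sum>v\<in>T'-G. face_sign v (insert v G) * c (insert v G))"
        unfolding bdry_def e by (subst sum.insert) (use fT T'eq in auto)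
      also have "(\<Sum>v\<in>T'-G. face_sign v (insert v G) * c (insert v G)) = bdry T' c0 G"
        unfolding bdry_def c0_def by (rule sum.cong) (use FG T'eq in auto)
      finally have "face_sign y F * c F + bdry T' c0 G = 0" using z FG by simp
      then have "bdry T' c0 G = - (face_sign y F * c F)" by (metis add_eq_0_iff)
      with 1 have "face_sign y F * bdry T d F = face_sign y F * c F" by simp
      then show ?thesis by (simp add: fs_nz)
    qed
  qed
qed

lemma suspension:
  fixes c'' :: "'a set \<Rightarrow> 'k::field"
  assumes fT: "finite T" and uT: "u \<notin> T" and vT: "v \<notin> T" and uv: "u \<noteq> v" and Evu: "E v u"
    and nu: "\<forall>t\<in>T. \<not> E u t" and nv: "\<forall>t\<in>T. \<not> E v t"
    and cyc: "is_cycle E T m c''" and nb: "\<not> is_boundary E T m c''"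
  shows "\<exists>c::'a set \<Rightarrow> 'k. is_cycle E (insert u (insert v T)) (Suc m) c
            \<and> \<not> is_boundary E (insert u (insert v T)) (Suc m) c"
proof -
  define T1 where "T1 = insert u T"
  define S where "S = insert u (insert v T)"
  have fS: "finite S" and fT1: "finite T1" using fT by (auto simp: S_def T1_def)
  have chc: "is_chain E T m c''" using cyc by (simp add: is_cycle_def)
  have cind: "F \<subseteq> T" if "c'' F \<noteq> 0" for F using chc that by (auto simp: is_chain_def indep_def)
  have cyc1: "is_cycle E T1 m c''"
    unfolding is_cycle_def
  proof (intro conjI allI impI)
    show "is_chain E T1 m c''" using chain_mono[OF chc] by (auto simp: T1_def)
    fix G assume G: "indep E T1 G \<and> card G + 1 = m"
    show "bdry T1 c'' G = 0"
    proof (cases "u \<in> G")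
      case True
      show ?thesis unfolding bdry_def
      proof (rule sum.neutral, intro ballI)
        fix x have "c'' (insert x G) = 0" using cind True uT by blast
        then show "face_sign x (insert x G) * c'' (insert x G) = 0" by simp
      qed
    next
      case False
      then have iG: "indep E T G" using G by (auto simp: indep_def T1_def)
      have "c'' (insert u G) = 0" using cind uT by blast
      then have "bdry T1 c'' G = bdry (T1 - {u}) c'' G" using bdry_remove[OF fT1] by blast
      also have "T1 - {u} = T" using uT by (auto simp: T1_def)
      finally show ?thesis using cyc iG G by (simp add: is_cycle_def)
    qed
  qed
  have "is_boundary E T1 m c''"
    by (rule isolated_boundary[OF fT1 _ _ cyc1]) (use nu irr in \<open>auto simp: T1_def\<close>)
  then obtain e where che: "is_chain E T1 (m+1) e"
    and ce: "\<forall>F. indep E T1 F \<and> card F = m \<longrightarrow> c'' F = bdry T1 e F"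
    by (auto simp: is_boundary_def)
  have eind: "F \<subseteq> T1" if "e F \<noteq> 0" for F using che that by (auto simp: is_chain_def indep_def)
  have vT1: "v \<notin> T1" using vT uv by (auto simp: T1_def)
  have Tv: "{t\<in>S. t \<noteq> v \<and> \<not> E v t} = T" using Evu nv vT by (auto simp: S_def)
  have vS: "v \<in> S" by (simp add: S_def)
  define D where "D = cone v c''"
  have chD: "is_chain E S (Suc m) D" using chain_cone[OF vS fS] chc Tv by (simp add: D_def)
  have Dind: "\<forall>F. D F \<noteq> 0 \<longrightarrow> indep E S F" using chD by (simp add: is_chain_def)
  have lD: "link v D = c''" using link_cone[OF chc vT] by (simp add: D_def)
  define c where "c = (\<lambda>F. D F - e F)"
  have eS: "is_chain E S (Suc m) e" using chain_mono[OF che] by (auto simp: S_def T1_def)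
  have chcc: "is_chain E S (Suc m) c" unfolding c_def by (rule chain_diff[OF chD eS])
  have cycc: "is_cycle E S (Suc m) c"
    unfolding is_cycle_def
  proof (intro conjI allI impI)
    show "is_chain E S (Suc m) c" by (fact chcc)
    fix G assume G: "indep E S G \<and> card G + 1 = Suc m"
    have GS: "G \<subseteq> S" using G by (simp add: indep_def)
    have fG: "finite G" using GS fS finite_subset by blast
    show "bdry S c G = 0"
    proof (cases "v \<in> G")
      case False
      have 1: "bdry S D G = face_sign v (insert v G) * D (insert v G)"
        by (rule bdry_single) (use fS vS False in \<open>auto simp: D_def cone_def\<close>)
      also have "\<dots> = c'' G" using False by (simp add: D_def cone_def mult.assoc[symmetric] fs_sq)
      finally have 1: "bdry S D G = c'' G" .
      have "e (insert v G) = 0" using eind vT1 by blast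
      then have "bdry S e G = bdry (S - {v}) e G" using bdry_remove[OF fS] by blast
      also have "S - {v} = T1" using vT uv by (auto simp: S_def T1_def)
      also have "bdry T1 e G = c'' G"
      proof -
        have "indep E T1 G" using G False \<open>S - {v} = T1\<close> by (auto simp: indep_def)
        then show ?thesis using ce G by auto
      qed
      finally show ?thesis using 1 by (simp add: c_def bdry_diff)
    next
      case True
      define H where "H = G - {v}"
      have GH: "G = insert v H" "v \<notin> H" using True by (auto simp: H_def)
      have uH: "u \<notin> H"
      proof
        assume "u \<in> H"
        then have "u \<in> G" "v \<in> G" using GH by auto
        then show False using G Evu by (auto simp: indep_def)
      qed
      have HT: "H \<subseteq> T" using GS GH uH by (auto simp: S_def)
      have iH: "indep E T H" using G GH HT by (auto simp: indep_def)
      have fH: "finite H" using HT fT finite_subset by blast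
      have cH: "card H + 1 = m" using G GH fH by simp
      have "face_sign v (insert v H) * bdry S D (insert v H) = - bdry {t\<in>S. t \<noteq> v \<and> \<not> E v t} (link v D) H"
        by (rule KI[OF fS GH(2) _ Dind]) (use HT in \<open>auto simp: S_def\<close>)
      then have "face_sign v G * bdry S D G = - bdry T c'' H" using lD Tv GH by simp
      also have "bdry T c'' H = 0" using cyc iH cH by (simp add: is_cycle_def)
      finally have 1: "bdry S D G = 0" by (simp add: fs_nz)
      have 2: "bdry S e G = 0" unfolding bdry_def
      proof (rule sum.neutral, intro ballI)
        fix x have "e (insert x G) = 0" using eind True vT1 by blast
        then show "face_sign x (insert x G) * e (insert x G) = 0" by simp
      qed
      show ?thesis using 1 2 by (simp add: c_def bdry_diff)
    qed
  qed
  have nbc: "\<not> is_boundary E S (Suc m) c"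
  proof
    assume "is_boundary E S (Suc m) c"
    then obtain d where chd: "is_chain E S (Suc m + 1) d"
      and cd: "\<forall>F. indep E S F \<and> card F = Suc m \<longrightarrow> c F = bdry S d F"
      by (auto simp: is_boundary_def)
    have dind: "\<forall>F. d F \<noteq> 0 \<longrightarrow> indep E S F" using chd by (simp add: is_chain_def)
    have "is_boundary E T m c''" unfolding is_boundary_def
    proof (intro exI conjI allI impI)
      have "is_chain E T (Suc m) (link v d)" using chain_link[of E S "Suc m" d v] chd Tv by simp
      then show "is_chain E T (m+1) (\<lambda>H. - link v d H)" using chain_neg by auto
      fix H assume H: "indep E T H \<and> card H = m"
      have HT: "H \<subseteq> T" using H by (simp add: indep_def)
      have vH: "v \<notin> H" using HT vT by auto
      have fH: "finite H" using HT fT finite_subset by blast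
      have iF: "indep E S (insert v H)"
        using indep_insert_T[OF vS] H Tv by simp
      have cF: "card (insert v H) = Suc m" using H fH vH by simp
      have "c (insert v H) = face_sign v (insert v H) * c'' H"
      proof -
        have "e (insert v H) = 0" using eind vT1 by blast
        then show ?thesis using vH by (simp add: c_def D_def cone_def)
      qed
      moreover have "c (insert v H) = bdry S d (insert v H)" using cd iF cF by blast
      moreover have "face_sign v (insert v H) * bdry S d (insert v H) = - bdry {t\<in>S. t \<noteq> v \<and> \<not> E v t} (link v d) H"
        by (rule KI[OF fS vH _ dind]) (use HT in \<open>auto simp: S_def\<close>)
      ultimately have "face_sign v (insert v H) * (face_sign v (insert v H) * c'' H) = - bdry T (link v d) H"
        using Tv by simp
      then show "c'' H = bdry T (\<lambda>H. - link v d H) H"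
        by (simp add: bdry_neg mult.assoc[symmetric] fs_sq)
    qed
    with nb show False by simp
  qed
  show ?thesis using cycc nbc by (auto simp: S_def)
qed

end


lemma hom_bound:
  fixes K :: "'k::field itself"
  assumes "finite S" "ind_hom_nonzero K E S j"
  shows "j \<le> card S"
proof (rule ccontr)
  assume nj: "\<not> j \<le> card S"
  from assms(2) obtain c :: "'a set \<Rightarrow> 'k" where cyc: "is_cycle E S j c" and nb: "\<not> is_boundary E S j c"
    by (auto simp: ind_hom_nonzero_def)
  have z: "c F = 0" for F
  proof (rule ccontr)
    assume "c F \<noteq> 0"
    then have "F \<subseteq> S" "card F = j" using cyc by (auto simp: is_cycle_def is_chain_def indep_def)
    then have "card F \<le> card S" using assms(1) card_mono by blast
    with nj \<open>card F = j\<close> show False by simp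
  qed
  have "is_boundary E S j c" unfolding is_boundary_def
    by (rule exI[of _ "\<lambda>F. 0"]) (simp add: is_chain_def z bdry_def)
  with nb show False by simp
qed

lemma hom0: "ind_hom_nonzero (K::'k::field itself) E {} 0"
proof -
  define c :: "'a set \<Rightarrow> 'k" where "c = (\<lambda>F. if F = {} then 1 else 0)"
  have "is_cycle E {} 0 c" by (auto simp: c_def is_cycle_def is_chain_def indep_def)
  moreover have "\<not> is_boundary E {} 0 c"
  proof
    assume "is_boundary E {} 0 c"
    then obtain d where "\<forall>F. indep E {} F \<and> card F = 0 \<longrightarrow> c F = bdry {} d F"
      by (auto simp: is_boundary_def)
    then have "c {} = bdry {} d {}" by (auto simp: indep_def)
    then show False by (simp add: c_def bdry_def)
  qed
  ultimately show ?thesis unfolding ind_hom_nonzero_def by blast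
qed

lemma reg_facts:
  assumes "finite V"
  shows "\<exists>S\<subseteq>V. ind_hom_nonzero K E S (reg K V E)"
    and "S \<subseteq> V \<Longrightarrow> ind_hom_nonzero K E S j \<Longrightarrow> j \<le> reg K V E"
proof -
  let ?A = "{j. \<exists>S\<subseteq>V. ind_hom_nonzero K E S j}"
  have sub: "?A \<subseteq> {..card V}"
  proof
    fix j assume "j \<in> ?A"
    then obtain S where "S \<subseteq> V" "ind_hom_nonzero K E S j" by blast
    moreover then have "finite S" using assms finite_subset by blast
    ultimately have "j \<le> card S" "card S \<le> card V" using hom_bound card_mono assms by blast+
    then show "j \<in> {..card V}" by simp
  qed
  have fin: "finite ?A" using sub finite_subset by blast
  have ne: "0 \<in> ?A" using hom0 by blast
  have "reg K V E \<in> ?A" unfolding reg_def using Max_in[OF fin] ne by blast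
  then show "\<exists>S\<subseteq>V. ind_hom_nonzero K E S (reg K V E)" by blast
  assume "S \<subseteq> V" "ind_hom_nonzero K E S j"
  then have "j \<in> ?A" by blast
  then show "j \<le> reg K V E" unfolding reg_def using Max_ge[OF fin] by blast
qed

lemma indep_del: "x \<notin> S \<Longrightarrow> indep (\<lambda>a b. E a b \<and> a \<noteq> x \<and> b \<noteq> x) S = indep E S"
  by (auto simp: indep_def fun_eq_iff)

lemma ihn_cong: "indep E1 S = indep E2 S \<Longrightarrow> ind_hom_nonzero K E1 S j = ind_hom_nonzero K E2 S j"
  unfolding ind_hom_nonzero_def is_cycle_def is_chain_def is_boundary_def by simp

lemma nonprime_witness:
  assumes "finite V" "w \<in> V" "S \<subseteq> V - {w}" "ind_hom_nonzero K E S (reg K V E)"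
  shows "\<not> prime_graph K V E"
proof
  assume p: "prime_graph K V E"
  let ?E' = "\<lambda>a b. E a b \<and> a \<noteq> w \<and> b \<noteq> w"
  have "w \<notin> S" using assms(3) by auto
  then have "ind_hom_nonzero K ?E' S (reg K V E)"
    using ihn_cong[OF indep_del] assms(4) by blast
  then have "reg K V E \<le> reg K (V - {w}) ?E'"
    using reg_facts(2)[of "V - {w}" S K ?E'] assms by auto
  moreover have "reg K (V - {w}) ?E' < reg K V E" using p assms(2) by (auto simp: prime_graph_def)
  ultimately show False by simp
qed

theorem mainTheorem4:
  fixes V :: "'a::linorder set" and E :: "'a \<Rightarrow> 'a \<Rightarrow> bool" and K :: "'k::field itself"
  assumes "graph V E"
  shows "(\<forall>x\<in>V. \<forall>y\<in>V. x \<noteq> y \<and> open_nbhd V E y \<subseteq> open_nbhd V E x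
            \<longrightarrow> \<not> prime_graph K V E)
       \<and> (\<forall>u\<in>V. \<forall>v\<in>V. u \<noteq> v \<and> closed_nbhd V E u \<subseteq> closed_nbhd V E v \<and> degree V E v \<ge> 2
            \<longrightarrow> \<not> prime_graph K V E)"
proof -
  have fV: "finite V" and sy: "\<And>a b. E a b \<Longrightarrow> E b a" and ir: "\<And>a. \<not> E a a"
    and Ein: "\<And>a b. E a b \<Longrightarrow> a \<in> V \<and> b \<in> V"
    using assms by (auto simp: graph_def)
  interpret sg E
  proof
    fix a b assume "E a b" then show "E b a" by (rule sy)
  next
    fix a show "\<not> E a a" by (rule ir)
  qed
  obtain S where SV: "S \<subseteq> V" and hS: "ind_hom_nonzero K E S (reg K V E)"
    using reg_facts(1)[OF fV] by blast
  define R where "R = reg K V E"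
  have easy: "\<not> prime_graph K V E" if ne: "S \<noteq> V"
  proof -
    obtain w where "w \<in> V" "w \<notin> S" using SV ne by blast
    then show ?thesis using nonprime_witness[OF fV, of w S K E] SV hS by blast
  qed
  have hV: "ind_hom_nonzero K E V R" if "S = V" using hS that by (simp add: R_def)
  show ?thesis
  proof (intro conjI ballI impI)
    fix x y assume xV: "x \<in> V" and yV: "y \<in> V" and h: "x \<noteq> y \<and> open_nbhd V E y \<subseteq> open_nbhd V E x"
    show "\<not> prime_graph K V E"
    proof (cases "S = V")
      case False then show ?thesis by (rule easy)
    next
      case True
      then obtain c :: "'a set \<Rightarrow> 'k" where cyc: "is_cycle E V R c" and nb: "\<not> is_boundary E V R c"
        using hV by (auto simp: ind_hom_nonzero_def)
      from exactA[OF fV xV cyc nb] show ?thesis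
      proof
        assume "\<exists>c'::'a set \<Rightarrow> 'k. is_cycle E (V - {x}) R c' \<and> \<not> is_boundary E (V - {x}) R c'"
        then have "ind_hom_nonzero K E (V - {x}) R" by (auto simp: ind_hom_nonzero_def)
        then show ?thesis using nonprime_witness[OF fV xV, of "V - {x}" K E] by (simp add: R_def)
      next
        assume "\<exists>c1::'a set \<Rightarrow> 'k. 0 < R \<and> is_cycle E {t\<in>V. t \<noteq> x \<and> \<not> E x t} (R - 1) c1
              \<and> \<not> is_boundary E {t\<in>V. t \<noteq> x \<and> \<not> E x t} (R - 1) c1"
        then obtain c1 :: "'a set \<Rightarrow> 'k" where cy1: "is_cycle E {t\<in>V. t \<noteq> x \<and> \<not> E x t} (R - 1) c1"
          and nb1: "\<not> is_boundary E {t\<in>V. t \<noteq> x \<and> \<not> E x t} (R - 1) c1" by blast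
        have nxy: "\<not> E x y"
        proof
          assume "E x y"
          then have "x \<in> open_nbhd V E y" using sy xV by (auto simp: open_nbhd_def)
          then have "x \<in> open_nbhd V E x" using h by blast
          then show False using ir by (auto simp: open_nbhd_def)
        qed
        have yT: "y \<in> {t\<in>V. t \<noteq> x \<and> \<not> E x t}" using yV h nxy by auto
        have iso: "\<forall>t\<in>{t\<in>V. t \<noteq> x \<and> \<not> E x t}. \<not> E y t"
        proof (intro ballI notI)
          fix t assume t: "t \<in> {t\<in>V. t \<noteq> x \<and> \<not> E x t}" and "E y t"
          then have "t \<in> open_nbhd V E y" by (auto simp: open_nbhd_def)
          then have "t \<in> open_nbhd V E x" using h by blast
          then show False using t by (auto simp: open_nbhd_def)
        qed
        have "is_boundary E {t\<in>V. t \<noteq> x \<and> \<not> E x t} (R - 1) c1"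
          by (rule isolated_boundary[OF _ yT iso cy1]) (use fV in auto)
        with nb1 show ?thesis by simp
      qed
    qed
  next
    fix u v assume uV: "u \<in> V" and vV: "v \<in> V"
      and h: "u \<noteq> v \<and> closed_nbhd V E u \<subseteq> closed_nbhd V E v \<and> degree V E v \<ge> 2"
    have Evu: "E v u"
    proof -
      have "u \<in> closed_nbhd V E u" by (simp add: closed_nbhd_def)
      then have "u \<in> closed_nbhd V E v" using h by blast
      then show ?thesis using h by (auto simp: closed_nbhd_def open_nbhd_def)
    qed
    obtain w where wN: "w \<in> open_nbhd V E v" and wu: "w \<noteq> u"
    proof -
      have "\<not> open_nbhd V E v \<subseteq> {u}"
      proof
        assume "open_nbhd V E v \<subseteq> {u}"
        then have "card (open_nbhd V E v) \<le> card {u}" by (intro card_mono) auto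
        then show False using h by (simp add: degree_def)
      qed
      then show ?thesis using that by blast
    qed
    have Evw: "E v w" and wV: "w \<in> V" using wN by (auto simp: open_nbhd_def)
    have wv: "w \<noteq> v" using Evw ir by auto
    show "\<not> prime_graph K V E"
    proof (cases "S = V")
      case False then show ?thesis by (rule easy)
    next
      case True
      then obtain c :: "'a set \<Rightarrow> 'k" where cyc: "is_cycle E V R c" and nb: "\<not> is_boundary E V R c"
        using hV by (auto simp: ind_hom_nonzero_def)
      from exactA[OF fV vV cyc nb] show ?thesis
      proof
        assume "\<exists>c'::'a set \<Rightarrow> 'k. is_cycle E (V - {v}) R c' \<and> \<not> is_boundary E (V - {v}) R c'"
        then have "ind_hom_nonzero K E (V - {v}) R" by (auto simp: ind_hom_nonzero_def)
        then show ?thesis using nonprime_witness[OF fV vV, of "V - {v}" K E] by (simp add: R_def)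
      next
        define T where "T = {t\<in>V. t \<noteq> v \<and> \<not> E v t}"
        assume "\<exists>c1::'a set \<Rightarrow> 'k. 0 < R \<and> is_cycle E {t\<in>V. t \<noteq> v \<and> \<not> E v t} (R - 1) c1
              \<and> \<not> is_boundary E {t\<in>V. t \<noteq> v \<and> \<not> E v t} (R - 1) c1"
        then obtain c1 :: "'a set \<Rightarrow> 'k" where Rp: "0 < R" and cy1: "is_cycle E T (R - 1) c1"
          and nb1: "\<not> is_boundary E T (R - 1) c1" unfolding T_def by blast
        have nu: "\<forall>t\<in>T. \<not> E u t"
        proof (intro ballI notI)
          fix t assume t: "t \<in> T" and "E u t"
          then have "t \<in> closed_nbhd V E u" using Ein by (auto simp: closed_nbhd_def open_nbhd_def)
          then have "t \<in> closed_nbhd V E v" using h by blast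
          then show False using t by (auto simp: closed_nbhd_def open_nbhd_def T_def)
        qed
        have nv: "\<forall>t\<in>T. \<not> E v t" by (simp add: T_def)
        have fT: "finite T" using fV by (simp add: T_def)
        have uT: "u \<notin> T" and vT: "v \<notin> T" using Evu by (auto simp: T_def)
        obtain c2 :: "'a set \<Rightarrow> 'k" where
          cy2: "is_cycle E (insert u (insert v T)) (Suc (R - 1)) c2"
          and nb2: "\<not> is_boundary E (insert u (insert v T)) (Suc (R - 1)) c2"
          using suspension[OF fT uT vT _ Evu nu nv cy1 nb1] h by blast
        have "Suc (R - 1) = R" using Rp by simp
        then have "ind_hom_nonzero K E (insert u (insert v T)) R"
          using cy2 nb2 by (auto simp: ind_hom_nonzero_def)
        moreover have "insert u (insert v T) \<subseteq> V - {w}"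
          using uV vV wu wv Evw by (auto simp: T_def)
        ultimately show ?thesis using nonprime_witness[OF fV wV, of "insert u (insert v T)" K E]
          unfolding R_def by blast
      qed
    qed
  qed
qed

end
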